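(* Let $V$ be a finite-dimensional module over $\mathrm{QAWA}_2(A_R;z)$. Then every eigenvalue (in $\mathbb{K}$) of $x_2$ on $V$ is either an eigenvalue $\lambda$ of $x_1$ on $V$, or of the form $\gamma\lambda$ for some $\gamma\in\Gamma_R$ and some eigenvalue $\lambda$ of $x_1$ on $V$.
   Context: Let $\Bbbk$ be a commutative ring, $z\in\Bbbk^\times$, and $A$ a symmetric Frobenius superalgebra over $\Bbbk$ with even trace $\mathrm{tr}$, homogeneous basis $B_A$ and dual basis $\{b^\vee\}$, $\mathrm{tr}(b^\vee c)=\delta_{b,c}$. Let $\mathbb{K}\supseteq\Bbbk$ be an algebraically closed field and $R$ a finite-dimensional supercommutative superalgebra over $\mathbb{K}$; set $A_R:=R\otimes_\Bbbk A$ (a symmetric Frobenius superalgebra over $R$ with trace $\mathrm{id}\otimes\mathrm{tr}$). $\mathrm{QAWA}_2(A_R;z)$ is the $R$-superalgebra generated by $A_R\otimes_RA_R$ (factors numbered right to left, $a^{(1)}=1\otimes a$, $a^{(2)}=a\otimes1$), commuting even invertible $x_1,x_2$, and even $\sigma_1$, with relations $\sigma_1^2=z\tau_1\sigma_1+1$ where $\tau_1:=\sum_{b\in B_A}b\otimes b^\vee$, $\sigma_1\mathbf a=s_1(\mathbf a)\sigma_1$ ($s_1$ the superswap of the two factors), $\sigma_1x_1\sigma_1=x_2$, $x_i\mathbf a=\mathbf ax_i$. Let $m(w)\in\mathbb{K}[w]$ be the minimal polynomial of the $\mathbb{K}$-linear endomorphism of $A_R\otimes_RA_R$ given by left multiplication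 by $z\tau_1$. $\Gamma_R$ is the subgroup of $\mathbb{K}^\times$ generated by $\{\mu/(\mu-\eta):\mu,\eta\in\mathbb{K},\ m(\eta)=0,\ \mu^2-\mu\eta-1=0\}$. *)

theory Defs
  imports "Jordan_Normal_Form.Char_Poly"
begin

text \<open>Sign rule for super (Z/2-graded) objects; parity True = odd.\<close>
definition psign :: "bool \<Rightarrow> bool \<Rightarrow> 'a::comm_ring_1" where
  "psign p q = (if p \<and> q then -1 else 1)"

text \<open>An injective unital ring homomorphism (the inclusion of the ground ring into the field K).\<close>
definition ring_embedding :: "('k::comm_ring_1 \<Rightarrow> 'K::field) \<Rightarrow> bool" where
  "ring_embedding \<iota> \<longleftrightarrow> \<iota> 0 = 0 \<and> \<iota> 1 = 1 \<and> (\<forall>a b. \<iota> (a + b) = \<iota> a + \<iota> b)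
     \<and> (\<forall>a b. \<iota> (a * b) = \<iota> a * \<iota> b) \<and> inj \<iota>"

definition alg_closed_field :: "'K::field itself \<Rightarrow> bool" where
  "alg_closed_field TYPE('K) \<longleftrightarrow> (\<forall>p::'K poly. degree p > 0 \<longrightarrow> (\<exists>x. poly p x = 0))"

text \<open>An associative unital superalgebra, free over the scalars with finite homogeneous basis
  indexed by the finite type 'i: e_i e_j = sum_k m i j k e_k, 1 = sum_k u k e_k,
  p i = parity of e_i (True = odd).\<close>
definition superalg :: "('i::finite \<Rightarrow> 'i \<Rightarrow> 'i \<Rightarrow> 'a::comm_ring_1) \<Rightarrow> ('i \<Rightarrow> 'a) \<Rightarrow> ('i \<Rightarrow> bool) \<Rightarrow> bool" where
  "superalg m u p \<longleftrightarrow>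
     (\<forall>i j l s. (\<Sum>k\<in>UNIV. m i j k * m k l s) = (\<Sum>k\<in>UNIV. m j l k * m i k s))
   \<and> (\<forall>i s. (\<Sum>k\<in>UNIV. u k * m k i s) = (if i = s then 1 else 0))
   \<and> (\<forall>i s. (\<Sum>k\<in>UNIV. u k * m i k s) = (if i = s then 1 else 0))
   \<and> (\<forall>i j k. m i j k \<noteq> 0 \<longrightarrow> (p k \<longleftrightarrow> p i \<noteq> p j))
   \<and> (\<forall>k. u k \<noteq> 0 \<longrightarrow> \<not> p k)"

definition supercomm_superalg :: "('i::finite \<Rightarrow> 'i \<Rightarrow> 'i \<Rightarrow> 'a::comm_ring_1) \<Rightarrow> ('i \<Rightarrow> 'a) \<Rightarrow> ('i \<Rightarrow> bool) \<Rightarrow> bool" where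
  "supercomm_superalg m u p \<longleftrightarrow> superalg m u p \<and> (\<forall>i j k. m i j k = psign (p i) (p j) * m j i k)"

text \<open>tr(e_b e_c), where tr is given by its values on the basis.\<close>
definition trprod :: "('b::finite \<Rightarrow> 'b \<Rightarrow> 'b \<Rightarrow> 'k::comm_ring_1) \<Rightarrow> ('b \<Rightarrow> 'k) \<Rightarrow> 'b \<Rightarrow> 'b \<Rightarrow> 'k" where
  "trprod m tr b c = (\<Sum>d\<in>UNIV. m b c d * tr d)"

text \<open>Symmetric Frobenius superalgebra with even trace tr, homogeneous basis (indexed by 'b)
  and dual basis b\<or> = sum_c dual b c e_c with tr(b\<or> c) = delta.\<close>
definition sym_frob_superalg :: "('b::finite \<Rightarrow> 'b \<Rightarrow> 'b \<Rightarrow> 'k::comm_ring_1) \<Rightarrow> ('b \<Rightarrow> 'k) \<Rightarrow> ('b \<Rightarrow> bool)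
     \<Rightarrow> ('b \<Rightarrow> 'k) \<Rightarrow> ('b \<Rightarrow> 'b \<Rightarrow> 'k) \<Rightarrow> bool" where
  "sym_frob_superalg m u p tr dual \<longleftrightarrow> superalg m u p
   \<and> (\<forall>b. p b \<longrightarrow> tr b = 0)
   \<and> (\<forall>b c. trprod m tr b c = psign (p b) (p c) * trprod m tr c b)
   \<and> (\<forall>b c. (\<Sum>d\<in>UNIV. dual b d * trprod m tr d c) = (if b = c then 1 else 0))"

text \<open>Structure constants of A_R \<otimes>_R A_R = R \<otimes> A \<otimes> A (super tensor product) over K,
  with K-basis e_(r,a,b) = r \<otimes> a \<otimes> b (a in tensor factor 2, b in factor 1).\<close>
definition tmul :: "('r \<Rightarrow> 'r \<Rightarrow> 'r \<Rightarrow> 'K::field) \<Rightarrow> ('r \<Rightarrow> bool) \<Rightarrow> ('b \<Rightarrow> 'b \<Rightarrow> 'b \<Rightarrow> 'k::comm_ring_1) \<Rightarrow> ('b \<Rightarrow> bool)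
     \<Rightarrow> ('k \<Rightarrow> 'K) \<Rightarrow> 'r \<times> 'b \<times> 'b \<Rightarrow> 'r \<times> 'b \<times> 'b \<Rightarrow> 'r \<times> 'b \<times> 'b \<Rightarrow> 'K" where
  "tmul mR pR mA pA \<iota> x y w = (case x of (r, a, b) \<Rightarrow> case y of (r', a', b') \<Rightarrow> case w of (r'', a'', b'') \<Rightarrow>
     psign (pA b) (pR r') * psign (pA a) (pR r') * psign (pA b) (pA a')
       * mR r r' r'' * \<iota> (mA a a' a'') * \<iota> (mA b b' b''))"

definition tunit :: "('r \<Rightarrow> 'K::field) \<Rightarrow> ('b \<Rightarrow> 'k::comm_ring_1) \<Rightarrow> ('k \<Rightarrow> 'K) \<Rightarrow> 'r \<times> 'b \<times> 'b \<Rightarrow> 'K" where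
  "tunit uR uA \<iota> w = (case w of (r, a, b) \<Rightarrow> uR r * \<iota> (uA a) * \<iota> (uA b))"

text \<open>Coordinates of tau_1 = sum_b b \<otimes> b\<or> (i.e. 1_R \<otimes> b \<otimes> b\<or>).\<close>
definition ttau :: "('r \<Rightarrow> 'K::field) \<Rightarrow> ('b \<Rightarrow> 'b \<Rightarrow> 'k::comm_ring_1) \<Rightarrow> ('k \<Rightarrow> 'K) \<Rightarrow> 'r \<times> 'b \<times> 'b \<Rightarrow> 'K" where
  "ttau uR dual \<iota> w = (case w of (r, a, b) \<Rightarrow> uR r * \<iota> (dual a b))"

text \<open>Multiplication in an algebra given by structure constants, on coordinate vectors.\<close>
definition cmult :: "('i::finite \<Rightarrow> 'i \<Rightarrow> 'i \<Rightarrow> 'K::field) \<Rightarrow> ('i \<Rightarrow> 'K) \<Rightarrow> ('i \<Rightarrow> 'K) \<Rightarrow> 'i \<Rightarrow> 'K" where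
  "cmult m u v = (\<lambda>k. \<Sum>i\<in>UNIV. \<Sum>j\<in>UNIV. u i * v j * m i j k)"

text \<open>Evaluation of a polynomial at a K-linear endomorphism f of K^'i.\<close>
definition op_poly :: "'K::field poly \<Rightarrow> (('i \<Rightarrow> 'K) \<Rightarrow> ('i \<Rightarrow> 'K)) \<Rightarrow> ('i \<Rightarrow> 'K) \<Rightarrow> ('i \<Rightarrow> 'K)" where
  "op_poly q f v = (\<lambda>i. \<Sum>k\<le>degree q. coeff q k * (f ^^ k) v i)"

text \<open>m is the minimal polynomial of the linear endomorphism f: monic, annihilates f, and
  divides every polynomial annihilating f.\<close>
definition is_min_poly :: "(('i \<Rightarrow> 'K::field) \<Rightarrow> ('i \<Rightarrow> 'K)) \<Rightarrow> 'K poly \<Rightarrow> bool" where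
  "is_min_poly f m \<longleftrightarrow> lead_coeff m = 1 \<and> (\<forall>v. op_poly m f v = (\<lambda>_. 0))
     \<and> (\<forall>q. (\<forall>v. op_poly q f v = (\<lambda>_. 0)) \<longrightarrow> m dvd q)"

text \<open>The subgroup of the multiplicative group generated by a set S of units.\<close>
inductive_set gen_mult_subgroup :: "'K::field set \<Rightarrow> 'K set" for S where
  one: "1 \<in> gen_mult_subgroup S"
| mul: "x \<in> gen_mult_subgroup S \<Longrightarrow> s \<in> S \<Longrightarrow> x * s \<in> gen_mult_subgroup S"
| mul_inv: "x \<in> gen_mult_subgroup S \<Longrightarrow> s \<in> S \<Longrightarrow> x * inverse s \<in> gen_mult_subgroup S"

definition Gamma_R :: "'K::field poly \<Rightarrow> 'K set" where
  "Gamma_R m = gen_mult_subgroup {\<mu> / (\<mu> - \<eta>) | \<mu> \<eta>. poly m \<eta> = 0 \<and> \<mu>^2 - \<mu> * \<eta> - 1 = 0}"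

text \<open>K-linear combination sum_k c k * M k of n x n matrices.\<close>
definition lincomb_mat :: "nat \<Rightarrow> ('i::finite \<Rightarrow> 'K::field) \<Rightarrow> ('i \<Rightarrow> 'K mat) \<Rightarrow> 'K mat" where
  "lincomb_mat n c M = mat n n (\<lambda>(p, q). \<Sum>k\<in>UNIV. c k * M k $$ (p, q))"

text \<open>A module over QAWA_2(A_R; z) on V = K^n: images rho of the K-basis of A_R \<otimes>_R A_R
  (a K-algebra homomorphism), X1, X2 (images of x1, x2) and S (image of sigma_1),
  satisfying the defining relations.\<close>
definition qawa2_module ::
  "('r::finite \<Rightarrow> 'r \<Rightarrow> 'r \<Rightarrow> 'K::field) \<Rightarrow> ('r \<Rightarrow> 'K) \<Rightarrow> ('r \<Rightarrow> bool)
   \<Rightarrow> ('b::finite \<Rightarrow> 'b \<Rightarrow> 'b \<Rightarrow> 'k::comm_ring_1) \<Rightarrow> ('b \<Rightarrow> 'k) \<Rightarrow> ('b \<Rightarrow> bool) \<Rightarrow> ('b \<Rightarrow> 'b \<Rightarrow> 'k)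
   \<Rightarrow> ('k \<Rightarrow> 'K) \<Rightarrow> 'k \<Rightarrow> nat \<Rightarrow> ('r \<times> 'b \<times> 'b \<Rightarrow> 'K mat) \<Rightarrow> 'K mat \<Rightarrow> 'K mat \<Rightarrow> 'K mat \<Rightarrow> bool" where
  "qawa2_module mR uR pR mA uA pA dual \<iota> z n \<rho> X1 X2 S \<longleftrightarrow>
     (\<forall>i. \<rho> i \<in> carrier_mat n n) \<and> X1 \<in> carrier_mat n n \<and> X2 \<in> carrier_mat n n \<and> S \<in> carrier_mat n n
   \<and> lincomb_mat n (tunit uR uA \<iota>) \<rho> = 1\<^sub>m n
   \<and> (\<forall>i j. \<rho> i * \<rho> j = lincomb_mat n (tmul mR pR mA pA \<iota> i j) \<rho>)
   \<and> invertible_mat X1 \<and> invertible_mat X2 \<and> X1 * X2 = X2 * X1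
   \<and> (\<forall>i. X1 * \<rho> i = \<rho> i * X1) \<and> (\<forall>i. X2 * \<rho> i = \<rho> i * X2)
   \<and> S * S = \<iota> z \<cdot>\<^sub>m (lincomb_mat n (ttau uR dual \<iota>) \<rho> * S) + 1\<^sub>m n
   \<and> (\<forall>r a b. S * \<rho> (r, a, b) = (psign (pA a) (pA b) \<cdot>\<^sub>m \<rho> (r, b, a)) * S)
   \<and> S * X1 * S = X2"

end

theory Submission
  imports Defs
begin

definition kv :: "'a::field mat \<Rightarrow> 'a vec \<Rightarrow> nat \<Rightarrow> 'a vec" where
  "kv B v k = ((\<lambda>w. B *\<^sub>v w) ^^ k) v"

lemma kv_0[simp]: "kv B v 0 = v" by (simp add: kv_def)
lemma kv_Suc: "kv B v (Suc k) = B *\<^sub>v kv B v k" by (simp add: kv_def)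

lemma kv_carrier: "B \<in> carrier_mat n n \<Longrightarrow> v \<in> carrier_vec n \<Longrightarrow> kv B v k \<in> carrier_vec n"
  by (induct k) (auto simp: kv_Suc)

lemma mv_index: "M \<in> carrier_mat n n \<Longrightarrow> x \<in> carrier_vec n \<Longrightarrow> i < n \<Longrightarrow>
   (M *\<^sub>v x) $ i = (\<Sum>j<n. M $$ (i,j) * x $ j)"
  by (auto simp: scalar_prod_def atLeast0LessThan)

definition hv :: "nat \<Rightarrow> 'a::field mat \<Rightarrow> 'a vec \<Rightarrow> 'a poly \<Rightarrow> 'a vec" where
  "hv n B v q = vec n (\<lambda>i. \<Sum>k\<le>degree q. coeff q k * kv B v k $ i)"

lemma hv_carrier[simp]: "hv n B v q \<in> carrier_vec n" by (simp add: hv_def)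
lemma hv_dim[simp]: "dim_vec (hv n B v q) = n" by (simp add: hv_def)

lemma hv_alt: assumes "degree q < N"
  shows "hv n B v q = vec n (\<lambda>i. \<Sum>k<N. coeff q k * kv B v k $ i)"
proof -
  have "(\<Sum>k\<le>degree q. coeff q k * kv B v k $ i) = (\<Sum>k<N. coeff q k * kv B v k $ i)" for i
    by (rule sum.mono_neutral_left) (use assms in \<open>auto simp: coeff_eq_0\<close>)
  thus ?thesis by (simp add: hv_def)
qed

lemma mv_hv: assumes M: "M \<in> carrier_mat n n" and B: "B \<in> carrier_mat n n" and v: "v \<in> carrier_vec n"
  and i: "i < n" and N: "degree q < N"
  shows "(M *\<^sub>v hv n B v q) $ i = (\<Sum>k<N. coeff q k * (M *\<^sub>v kv B v k) $ i)"
proof -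
  have "(M *\<^sub>v hv n B v q) $ i = (\<Sum>j<n. M $$ (i,j) * (\<Sum>k<N. coeff q k * kv B v k $ j))"
  proof -
    have "\<forall>j<n. hv n B v q $ j = (\<Sum>k<N. coeff q k * kv B v k $ j)" using hv_alt[OF N] by simp
    thus ?thesis using mv_index[OF M hv_carrier i] by simp
  qed
  also have "\<dots> = (\<Sum>k<N. coeff q k * (\<Sum>j<n. M $$ (i,j) * kv B v k $ j))"
    by (simp add: sum_distrib_left sum.swap[of _ "{..<n}"] mult.assoc mult.left_commute)
  also have "\<dots> = (\<Sum>k<N. coeff q k * (M *\<^sub>v kv B v k) $ i)"
    using mv_index[OF M kv_carrier[OF B v] i] by simp
  finally show ?thesis .
qed

context fixes B :: "'a::field mat" and p :: "'a poly" and v :: "'a vec" and n and \<beta> :: 'a and i assumes B: "B \<in> carrier_mat n n" and v: "v \<in> carrier_vec n" and i: "i < n"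
begin
lemma t1: "(\<Sum>k<Suc (Suc (degree p)). coeff (pCons 0 p) k * kv B v k $ i) = (\<Sum>k<Suc (degree p). coeff p k * kv B v (Suc k) $ i)"
    by (subst sum.lessThan_Suc_shift) simp
lemma t2: "(\<Sum>k<Suc (degree p). coeff p k * kv B v (Suc k) $ i) = (B *\<^sub>v hv n B v p) $ i"
    using mv_hv[OF B B v i, of p "Suc (degree p)"] by (simp add: kv_Suc)
lemma t3: "(\<Sum>k<Suc (Suc (degree p)). coeff p k * kv B v k $ i) = hv n B v p $ i"
    using i by (simp add: hv_alt[of p "Suc (Suc (degree p))"])
lemma t4: "(B *\<^sub>v hv n B v p - \<beta> \<cdot>\<^sub>v hv n B v p) $ i = (B *\<^sub>v hv n B v p) $ i - \<beta> * hv n B v p $ i"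
    using i B by simp
lemma t5: "degree ([:-\<beta>,1:] * p) < Suc (Suc (degree p))"
    using degree_mult_le[of "[:-\<beta>,1:]" p] by simp
lemma t6: "hv n B v ([:-\<beta>,1:] * p) $ i = (\<Sum>k<Suc (Suc (degree p)). coeff ([:-\<beta>,1:] * p) k * kv B v k $ i)"
    unfolding hv_alt[OF t5] using i by (simp only: index_vec)
lemma t7: "coeff ([:-\<beta>,1:] * p) k = coeff (pCons 0 p) k - \<beta> * coeff p k"
  by (simp add: mult_pCons_left)
lemma t8: "(\<Sum>k<Suc (Suc (degree p)). coeff ([:-\<beta>,1:] * p) k * kv B v k $ i) = (\<Sum>k<Suc (Suc (degree p)). coeff (pCons 0 p) k * kv B v k $ i)
        - \<beta> * (\<Sum>k<Suc (Suc (degree p)). coeff p k * kv B v k $ i)"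
  unfolding t7 by (simp only: left_diff_distrib mult.assoc sum_subtractf sum_distrib_left)
lemma hv_lin_i: "hv n B v ([:-\<beta>,1:] * p) $ i = (B *\<^sub>v hv n B v p - \<beta> \<cdot>\<^sub>v hv n B v p) $ i"
  by (simp only: t6 t8 t1 t2 t3 t4)
end

lemma hv_lin: assumes B: "B \<in> carrier_mat n n" and v: "v \<in> carrier_vec n"
  shows "hv n B v ([:-\<beta>,1:] * p) = B *\<^sub>v hv n B v p - \<beta> \<cdot>\<^sub>v hv n B v p"
proof (rule eq_vecI)
  fix i assume "i < dim_vec (B *\<^sub>v hv n B v p - \<beta> \<cdot>\<^sub>v hv n B v p)"
  hence i: "i < n" by simp
  show "hv n B v ([:-\<beta>,1:] * p) $ i = (B *\<^sub>v hv n B v p - \<beta> \<cdot>\<^sub>v hv n B v p) $ i"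
    by (rule hv_lin_i[OF B v i])
qed (use B in simp)

lemma hv_const: assumes v: "v \<in> carrier_vec n" and d: "degree q = 0"
  shows "hv n B v q = coeff q 0 \<cdot>\<^sub>v v"
proof (rule eq_vecI)
  have dv: "dim_vec v = n" using v by (rule carrier_vecD)
  fix i assume "i < dim_vec (coeff q 0 \<cdot>\<^sub>v v)"
  hence i: "i < n" using dv by simp
  have "hv n B v q $ i = (\<Sum>k\<le>degree q. coeff q k * kv B v k $ i)" using i by (simp add: hv_def)
  also have "\<dots> = (\<Sum>k\<le>0. coeff q k * kv B v k $ i)" by (simp only: d)
  also have "\<dots> = coeff q 0 * v $ i" by simp
  also have "\<dots> = (coeff q 0 \<cdot>\<^sub>v v) $ i" using i dv by simp
  finally show "hv n B v q $ i = (coeff q 0 \<cdot>\<^sub>v v) $ i" .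
next
  show "dim_vec (hv n B v q) = dim_vec (coeff q 0 \<cdot>\<^sub>v v)" using carrier_vecD[OF v] by simp
qed

lemma kv_comm: assumes A: "A \<in> carrier_mat n n" and B: "B \<in> carrier_mat n n" and v: "v \<in> carrier_vec n"
  and AB: "A * B = B * A" and Av: "A *\<^sub>v v = \<alpha> \<cdot>\<^sub>v v"
  shows "A *\<^sub>v kv B v k = \<alpha> \<cdot>\<^sub>v kv B v k"
proof (induct k)
  case 0 then show ?case using Av by simp
next
  case (Suc k)
  have c: "kv B v k \<in> carrier_vec n" by (rule kv_carrier[OF B v])
  have "A *\<^sub>v kv B v (Suc k) = (A * B) *\<^sub>v kv B v k"
    by (simp add: kv_Suc assoc_mult_mat_vec[OF A B c])
  also have "\<dots> = B *\<^sub>v (A *\<^sub>v kv B v k)" by (simp add: AB assoc_mult_mat_vec[OF B A c])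
  also have "\<dots> = \<alpha> \<cdot>\<^sub>v kv B v (Suc k)" using Suc c B by (simp add: kv_Suc mult_mat_vec[OF B c])
  finally show ?case .
qed

lemma hv_comm: assumes A: "A \<in> carrier_mat n n" and B: "B \<in> carrier_mat n n" and v: "v \<in> carrier_vec n"
  and AB: "A * B = B * A" and Av: "A *\<^sub>v v = \<alpha> \<cdot>\<^sub>v v"
  shows "A *\<^sub>v hv n B v q = \<alpha> \<cdot>\<^sub>v hv n B v q"
proof (rule eq_vecI)
  fix i assume "i < dim_vec (\<alpha> \<cdot>\<^sub>v hv n B v q)"
  hence i: "i < n" by simp
  have "(A *\<^sub>v hv n B v q) $ i = (\<Sum>k<Suc (degree q). coeff q k * (A *\<^sub>v kv B v k) $ i)"
    by (rule mv_hv[OF A B v i]) simp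
  also have "\<dots> = (\<Sum>k<Suc (degree q). coeff q k * (\<alpha> * kv B v k $ i))"
  proof -
    have "\<And>k. (\<alpha> \<cdot>\<^sub>v kv B v k) $ i = \<alpha> * kv B v k $ i"
      using i by (simp add: carrier_vecD[OF kv_carrier[OF B v]])
    thus ?thesis using kv_comm[OF A B v AB Av] by simp
  qed
  also have "\<dots> = (\<alpha> \<cdot>\<^sub>v hv n B v q) $ i"
    using i by (simp add: hv_alt[of q "Suc (degree q)"] sum_distrib_left mult.left_commute del: sum.lessThan_Suc)
  finally show "(A *\<^sub>v hv n B v q) $ i = (\<alpha> \<cdot>\<^sub>v hv n B v q) $ i" .
qed (use A in simp)

lemma L_deg0: assumes v: "v \<in> carrier_vec n" and v0: "v \<noteq> 0\<^sub>v n" and d: "degree q = 0" and q: "q \<noteq> 0"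
  shows "hv n B v q \<noteq> 0\<^sub>v n"
proof
  assume h: "hv n B v q = 0\<^sub>v n"
  have "coeff q 0 \<cdot>\<^sub>v v = hv n B v q" using hv_const[OF v d] by (rule sym)
  hence c0: "coeff q 0 \<cdot>\<^sub>v v = 0\<^sub>v n" using h by (rule trans)
  have "lead_coeff q \<noteq> 0" using q by simp
  hence cn: "coeff q 0 \<noteq> 0" using d by metis
  have "v = 0\<^sub>v n"
  proof (rule eq_vecI)
    fix i assume i: "i < dim_vec (0\<^sub>v n :: 'a vec)"
    have dv: "dim_vec v = n" using v by (rule carrier_vecD)
    have "(coeff q 0 \<cdot>\<^sub>v v) $ i = 0" using c0 i by simp
    moreover have "(coeff q 0 \<cdot>\<^sub>v v) $ i = coeff q 0 * v $ i" using i dv by simp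
    ultimately have "coeff q 0 * v $ i = 0" by simp
    thus "v $ i = 0\<^sub>v n $ i" using cn i by simp
  qed (use v in simp)
  with v0 show False by simp
qed

lemma L_root: assumes ac: "alg_closed_field TYPE('a::field)" and d: "degree (q :: 'a poly) \<noteq> 0"
  shows "\<exists>\<beta> q'. q = [:-\<beta>,1:] * q' \<and> q' \<noteq> 0 \<and> degree q = Suc (degree q')"
proof -
  have "\<exists>x. poly q x = 0" using ac d unfolding alg_closed_field_def by simp
  then obtain \<beta> where "poly q \<beta> = 0" by blast
  hence "[:-\<beta>,1:] dvd q" by (simp only: poly_eq_0_iff_dvd)
  then obtain q' where q: "q = [:-\<beta>,1:] * q'" by (rule dvdE)
  have q'0: "q' \<noteq> 0" using d q by (metis degree_0 mult_zero_right)
  have "degree ([:-\<beta>,1:] * q') = degree [:-\<beta>,1:] + degree q'"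
    by (rule degree_mult_eq) (use q'0 in auto)
  hence dq: "degree q = Suc (degree q')" unfolding q[symmetric] by simp
  show ?thesis using q q'0 dq by blast
qed

lemma L_step: assumes B: "B \<in> carrier_mat n n" and v: "v \<in> carrier_vec n"
  and h: "hv n B v ([:-\<beta>,1:] * q') = 0\<^sub>v n"
  shows "B *\<^sub>v hv n B v q' = \<beta> \<cdot>\<^sub>v hv n B v q'"
proof (rule eq_vecI)
  fix i assume "i < dim_vec (\<beta> \<cdot>\<^sub>v hv n B v q')"
  hence i: "i < n" by simp
  have "hv n B v ([:-\<beta>,1:] * q') $ i = 0" using h i by simp
  hence "(B *\<^sub>v hv n B v q' - \<beta> \<cdot>\<^sub>v hv n B v q') $ i = 0" by (simp only: hv_lin_i[OF B v i])
  hence "(B *\<^sub>v hv n B v q') $ i - \<beta> * hv n B v q' $ i = 0" by (simp only: t4[OF B v i])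
  moreover have "(\<beta> \<cdot>\<^sub>v hv n B v q') $ i = \<beta> * hv n B v q' $ i" using i by simp
  ultimately show "(B *\<^sub>v hv n B v q') $ i = (\<beta> \<cdot>\<^sub>v hv n B v q') $ i" by simp
qed (use B in simp)

lemma krylov_ind:
  assumes ac: "alg_closed_field TYPE('a::field)"
  and B: "B \<in> carrier_mat n n" and v: "(v :: 'a vec) \<in> carrier_vec n" and v0: "v \<noteq> 0\<^sub>v n"
  shows "q \<noteq> 0 \<Longrightarrow> hv n B v q = 0\<^sub>v n \<Longrightarrow> \<exists>p \<beta>. hv n B v p \<noteq> 0\<^sub>v n \<and> B *\<^sub>v hv n B v p = \<beta> \<cdot>\<^sub>v hv n B v p"
proof (induct "degree q" arbitrary: q rule: less_induct)
  case less
  show ?case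
  proof (cases "degree q = 0")
    case True
    have False using L_deg0[OF v v0 True less(2)] less(3) by blast
    thus ?thesis ..
  next
    case False
    from L_root[OF ac False] obtain \<beta> q' where q: "q = [:-\<beta>,1:] * q'" and q'0: "q' \<noteq> 0"
      and dq: "degree q = Suc (degree q')" by blast
    show ?thesis
    proof (cases "hv n B v q' = 0\<^sub>v n")
      case True
      have "degree q' < degree q" using dq by simp
      from less(1)[OF this q'0 True] show ?thesis .
    next
      case False
      have "hv n B v ([:-\<beta>,1:] * q') = 0\<^sub>v n" using less(3) q by (simp only:)
      from L_step[OF B v this] False show ?thesis by blast
    qed
  qed
qed

lemma lin_dep_kv:
  assumes B: "B \<in> carrier_mat n n" and v: "(v :: 'a::field vec) \<in> carrier_vec n"
  shows "\<exists>c. c \<in> carrier_vec (Suc n) \<and> c \<noteq> 0\<^sub>v (Suc n) \<and>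
     (\<forall>i<n. (\<Sum>j<Suc n. kv B v j $ i * c $ j) = 0)"
proof -
  define M where "M = mat\<^sub>r (Suc n) (Suc n) (\<lambda>i. if i = n then 0\<^sub>v (Suc n) else vec (Suc n) (\<lambda>j. kv B v j $ i))"
  have "det M = 0" unfolding M_def
    by (rule det_row_0) auto
  moreover have Mc: "M \<in> carrier_mat (Suc n) (Suc n)" unfolding M_def by simp
  ultimately obtain c where c: "c \<in> carrier_vec (Suc n)" "c \<noteq> 0\<^sub>v (Suc n)" "M *\<^sub>v c = 0\<^sub>v (Suc n)"
    using det_0_iff_vec_prod_zero[OF Mc] by blast
  have "(\<Sum>j<Suc n. kv B v j $ i * c $ j) = 0" if i: "i < n" for i
  proof -
    have "(M *\<^sub>v c) $ i = 0" using c(3) i by simp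
    moreover have "(M *\<^sub>v c) $ i = (\<Sum>j<Suc n. M $$ (i,j) * c $ j)"
      using mv_index[OF Mc c(1)] i by simp
    moreover have "\<And>j. j < Suc n \<Longrightarrow> M $$ (i,j) = kv B v j $ i"
      unfolding M_def using i by simp
    ultimately show ?thesis by simp
  qed
  with c show ?thesis by blast
qed

lemma krylov:
  assumes ac: "alg_closed_field TYPE('a::field)"
  and B: "B \<in> carrier_mat n n" and v: "(v :: 'a vec) \<in> carrier_vec n" and v0: "v \<noteq> 0\<^sub>v n"
  shows "\<exists>w \<beta>. w \<in> carrier_vec n \<and> w \<noteq> 0\<^sub>v n \<and> B *\<^sub>v w = \<beta> \<cdot>\<^sub>v w \<and>
     (\<forall>A \<alpha>. A \<in> carrier_mat n n \<longrightarrow> A * B = B * A \<longrightarrow> A *\<^sub>v v = \<alpha> \<cdot>\<^sub>v v \<longrightarrow> A *\<^sub>v w = \<alpha> \<cdot>\<^sub>v w)"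
proof -
  obtain c where c: "c \<in> carrier_vec (Suc n)" "c \<noteq> 0\<^sub>v (Suc n)"
    and cs: "\<And>i. i < n \<Longrightarrow> (\<Sum>j<Suc n. kv B v j $ i * c $ j) = 0"
    using lin_dep_kv[OF B v] by blast
  define q where "q = (\<Sum>j<Suc n. monom (c $ j) j)"
  have cq: "coeff q k = (if k < Suc n then c $ k else 0)" for k
    unfolding q_def by (simp add: coeff_sum coeff_monom)
  obtain j where j: "j < Suc n" "c $ j \<noteq> 0"
  proof -
    have "\<not> (\<forall>j<Suc n. c $ j = 0)"
    proof
      assume "\<forall>j<Suc n. c $ j = 0"
      hence "c = 0\<^sub>v (Suc n)" using c(1) by (intro eq_vecI) auto
      with c(2) show False by simp
    qed
    thus ?thesis using that by blast
  qed
  have q0: "q \<noteq> 0"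
  proof
    assume "q = 0"
    hence "coeff q j = 0" by simp
    with j cq show False by simp
  qed
  have dq: "degree q < Suc n"
  proof -
    have "degree q \<le> n" by (rule degree_le) (simp add: cq)
    thus ?thesis by simp
  qed
  have hq: "hv n B v q = 0\<^sub>v n"
  proof (rule eq_vecI)
    fix i assume "i < dim_vec (0\<^sub>v n :: 'a vec)"
    hence i: "i < n" by simp
    have "hv n B v q $ i = (\<Sum>k<Suc n. coeff q k * kv B v k $ i)"
      using i by (simp add: hv_alt[OF dq] del: sum.lessThan_Suc)
    also have "\<dots> = (\<Sum>k<Suc n. kv B v k $ i * c $ k)"
      by (intro sum.cong refl) (simp add: cq)
    also have "\<dots> = 0" by (rule cs[OF i])
    finally show "hv n B v q $ i = 0\<^sub>v n $ i" using i by simp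
  qed simp
  obtain p \<beta> where p: "hv n B v p \<noteq> 0\<^sub>v n" "B *\<^sub>v hv n B v p = \<beta> \<cdot>\<^sub>v hv n B v p"
    using krylov_ind[OF ac B v v0 q0 hq] by blast
  show ?thesis
    by (rule exI[of _ "hv n B v p"], rule exI[of _ \<beta>]) (use p hv_comm[OF _ B v] in auto)
qed

lemma lc_carrier[simp]: "lincomb_mat n c \<rho> \<in> carrier_mat n n"
  by (simp add: lincomb_mat_def)

lemma lc_entry: "p < n \<Longrightarrow> q < n \<Longrightarrow> lincomb_mat n c \<rho> $$ (p,q) = (\<Sum>k\<in>UNIV. c k * \<rho> k $$ (p,q))"
  by (simp add: lincomb_mat_def)

lemma mm_index: "A \<in> carrier_mat n n \<Longrightarrow> B \<in> carrier_mat n n \<Longrightarrow> p < n \<Longrightarrow> q < n \<Longrightarrow>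
   (A * B) $$ (p,q) = (\<Sum>r<n. A $$ (p,r) * B $$ (r,q))"
  by (simp add: scalar_prod_def atLeast0LessThan)

lemma lc_left: assumes M: "M \<in> carrier_mat n n" and R: "\<And>i. \<rho> i \<in> carrier_mat n n"
  shows "M * lincomb_mat n (c :: 'i::finite \<Rightarrow> 'a::field) \<rho> = lincomb_mat n c (\<lambda>i. M * \<rho> i)"
proof (rule eq_matI)
  fix p q assume "p < dim_row (lincomb_mat n c (\<lambda>i. M * \<rho> i))" "q < dim_col (lincomb_mat n c (\<lambda>i. M * \<rho> i))"
  hence p: "p < n" and q: "q < n" by (auto simp: lincomb_mat_def)
  have "(M * lincomb_mat n c \<rho>) $$ (p,q) = (\<Sum>r<n. M $$ (p,r) * (\<Sum>k\<in>UNIV. c k * \<rho> k $$ (r,q)))"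
    unfolding mm_index[OF M lc_carrier p q] by (intro sum.cong refl) (simp add: lc_entry q)
  also have "\<dots> = (\<Sum>k\<in>UNIV. c k * (\<Sum>r<n. M $$ (p,r) * \<rho> k $$ (r,q)))"
    by (simp add: sum_distrib_left sum.swap[of _ "{..<n}"] mult.left_commute)
  also have "\<dots> = (\<Sum>k\<in>UNIV. c k * (M * \<rho> k) $$ (p,q))"
    using mm_index[OF M R p q] by simp
  also have "\<dots> = lincomb_mat n c (\<lambda>i. M * \<rho> i) $$ (p,q)" by (rule lc_entry[OF p q, symmetric])
  finally show "(M * lincomb_mat n c \<rho>) $$ (p,q) = lincomb_mat n c (\<lambda>i. M * \<rho> i) $$ (p,q)" .
qed (use M in \<open>auto simp: lincomb_mat_def\<close>)

lemma lc_right: assumes M: "M \<in> carrier_mat n n" and R: "\<And>i. \<rho> i \<in> carrier_mat n n"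
  shows "lincomb_mat n (c :: 'i::finite \<Rightarrow> 'a::field) \<rho> * M = lincomb_mat n c (\<lambda>i. \<rho> i * M)"
proof (rule eq_matI)
  fix p q assume "p < dim_row (lincomb_mat n c (\<lambda>i. \<rho> i * M))" "q < dim_col (lincomb_mat n c (\<lambda>i. \<rho> i * M))"
  hence p: "p < n" and q: "q < n" by (auto simp: lincomb_mat_def)
  have "(lincomb_mat n c \<rho> * M) $$ (p,q) = (\<Sum>r<n. (\<Sum>k\<in>UNIV. c k * \<rho> k $$ (p,r)) * M $$ (r,q))"
    unfolding mm_index[OF lc_carrier M p q] by (intro sum.cong refl) (simp add: lc_entry p)
  also have "\<dots> = (\<Sum>k\<in>UNIV. c k * (\<Sum>r<n. \<rho> k $$ (p,r) * M $$ (r,q)))"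
    by (simp add: sum_distrib_left sum_distrib_right sum.swap[of _ "{..<n}"] mult.assoc)
  also have "\<dots> = (\<Sum>k\<in>UNIV. c k * (\<rho> k * M) $$ (p,q))"
    using mm_index[OF R M p q] by simp
  also have "\<dots> = lincomb_mat n c (\<lambda>i. \<rho> i * M) $$ (p,q)" by (rule lc_entry[OF p q, symmetric])
  finally show "(lincomb_mat n c \<rho> * M) $$ (p,q) = lincomb_mat n c (\<lambda>i. \<rho> i * M) $$ (p,q)" .
qed (use M in \<open>auto simp: lincomb_mat_def\<close>)

lemma lc_comm: assumes M: "M \<in> carrier_mat n n" and R: "\<And>i. \<rho> i \<in> carrier_mat n n"
  and C: "\<And>i. M * \<rho> i = \<rho> i * M"
  shows "M * lincomb_mat n (c :: 'i::finite \<Rightarrow> 'a::field) \<rho> = lincomb_mat n c \<rho> * M"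
  unfolding lc_left[OF M R] lc_right[OF M R] C ..

lemma lc_smult: "lincomb_mat n (\<lambda>k. a * x k) \<rho> = (a :: 'a::field) \<cdot>\<^sub>m lincomb_mat n (x :: 'i::finite \<Rightarrow> 'a) \<rho>"
proof (rule eq_matI)
  fix p q assume "p < dim_row (a \<cdot>\<^sub>m lincomb_mat n x \<rho>)" "q < dim_col (a \<cdot>\<^sub>m lincomb_mat n x \<rho>)"
  hence p: "p < n" and q: "q < n" by (simp_all add: lincomb_mat_def)
  have "lincomb_mat n (\<lambda>k. a * x k) \<rho> $$ (p,q) = (\<Sum>k\<in>UNIV. a * x k * \<rho> k $$ (p,q))"
    by (rule lc_entry[OF p q])
  also have "\<dots> = a * (\<Sum>k\<in>UNIV. x k * \<rho> k $$ (p,q))" by (simp only: sum_distrib_left mult.assoc)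
  also have "\<dots> = a * lincomb_mat n x \<rho> $$ (p,q)" by (simp only: lc_entry[OF p q])
  also have "\<dots> = (a \<cdot>\<^sub>m lincomb_mat n x \<rho>) $$ (p,q)" using p q by (simp add: lincomb_mat_def)
  finally show "lincomb_mat n (\<lambda>k. a * x k) \<rho> $$ (p,q) = (a \<cdot>\<^sub>m lincomb_mat n x \<rho>) $$ (p,q)" .
qed (simp_all add: lincomb_mat_def)

lemma swap2: "(\<Sum>i\<in>I. (\<Sum>k\<in>K. f k i) * h i) = (\<Sum>k\<in>K. \<Sum>i\<in>I. f k i * (h i :: 'a::comm_ring_1))"
  unfolding sum_distrib_right by (rule sum.swap)

lemma swap3: "(\<Sum>k\<in>K. (\<Sum>i\<in>I. \<Sum>j\<in>J. f i j k) * g k) = (\<Sum>i\<in>I. \<Sum>j\<in>J. \<Sum>k\<in>K. f i j k * (g k :: 'a::comm_ring_1))"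
proof -
  have "(\<Sum>k\<in>K. (\<Sum>i\<in>I. \<Sum>j\<in>J. f i j k) * g k) = (\<Sum>k\<in>K. \<Sum>i\<in>I. \<Sum>j\<in>J. f i j k * g k)"
    by (simp only: sum_distrib_right)
  also have "\<dots> = (\<Sum>i\<in>I. \<Sum>k\<in>K. \<Sum>j\<in>J. f i j k * g k)" by (rule sum.swap)
  also have "\<dots> = (\<Sum>i\<in>I. \<Sum>j\<in>J. \<Sum>k\<in>K. f i j k * g k)"
    by (rule sum.cong[OF refl]) (rule sum.swap)
  finally show ?thesis .
qed

lemma prod_sums: "(\<Sum>r\<in>R. (\<Sum>i\<in>I. f i r) * (\<Sum>j\<in>J. g j r)) = (\<Sum>i\<in>I. \<Sum>j\<in>J. \<Sum>r\<in>R. f i r * (g j r :: 'a::comm_ring_1))"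
proof -
  have "(\<Sum>r\<in>R. (\<Sum>i\<in>I. f i r) * (\<Sum>j\<in>J. g j r)) = (\<Sum>r\<in>R. \<Sum>i\<in>I. \<Sum>j\<in>J. f i r * g j r)"
    by (simp only: sum_product)
  also have "\<dots> = (\<Sum>i\<in>I. \<Sum>r\<in>R. \<Sum>j\<in>J. f i r * g j r)" by (rule sum.swap)
  also have "\<dots> = (\<Sum>i\<in>I. \<Sum>j\<in>J. \<Sum>r\<in>R. f i r * g j r)"
    by (rule sum.cong[OF refl]) (rule sum.swap)
  finally show ?thesis .
qed

lemma lc_mult: assumes R: "\<And>i. \<rho> i \<in> carrier_mat n n"
  and H: "\<And>i j. \<rho> i * \<rho> j = lincomb_mat n (tm i j) \<rho>"
  shows "lincomb_mat n (cmult tm a b) \<rho> = lincomb_mat n a \<rho> * lincomb_mat n (b :: 'i::finite \<Rightarrow> 'a::field) \<rho>"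
proof (rule eq_matI)
  fix p q assume "p < dim_row (lincomb_mat n a \<rho> * lincomb_mat n b \<rho>)" "q < dim_col (lincomb_mat n a \<rho> * lincomb_mat n b \<rho>)"
  hence p: "p < n" and q: "q < n" by (simp_all add: lincomb_mat_def)
  have "lincomb_mat n (cmult tm a b) \<rho> $$ (p,q) = (\<Sum>k\<in>UNIV. cmult tm a b k * \<rho> k $$ (p,q))"
    by (rule lc_entry[OF p q])
  also have "\<dots> = (\<Sum>k\<in>UNIV. (\<Sum>i\<in>UNIV. \<Sum>j\<in>UNIV. a i * b j * tm i j k) * \<rho> k $$ (p,q))"
    by (simp only: cmult_def)
  also have "\<dots> = (\<Sum>i\<in>UNIV. \<Sum>j\<in>UNIV. \<Sum>k\<in>UNIV. a i * b j * tm i j k * \<rho> k $$ (p,q))"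
    by (rule swap3)
  also have "\<dots> = (\<Sum>i\<in>UNIV. \<Sum>j\<in>UNIV. \<Sum>r<n. (a i * \<rho> i $$ (p,r)) * (b j * \<rho> j $$ (r,q)))"
  proof (intro sum.cong refl)
    fix i j
    have "(\<Sum>k\<in>UNIV. a i * b j * tm i j k * \<rho> k $$ (p,q)) = a i * b j * (\<Sum>k\<in>UNIV. tm i j k * \<rho> k $$ (p,q))"
      by (simp only: sum_distrib_left mult.assoc)
    also have "(\<Sum>k\<in>UNIV. tm i j k * \<rho> k $$ (p,q)) = (\<rho> i * \<rho> j) $$ (p,q)"
      by (simp only: H lc_entry[OF p q])
    also have "\<dots> = (\<Sum>r<n. \<rho> i $$ (p,r) * \<rho> j $$ (r,q))" by (rule mm_index[OF R R p q])
    also have "a i * b j * \<dots> = (\<Sum>r<n. (a i * \<rho> i $$ (p,r)) * (b j * \<rho> j $$ (r,q)))"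
      by (simp only: sum_distrib_left ac_simps)
    finally show "(\<Sum>k\<in>UNIV. a i * b j * tm i j k * \<rho> k $$ (p,q)) = (\<Sum>r<n. (a i * \<rho> i $$ (p,r)) * (b j * \<rho> j $$ (r,q)))" .
  qed
  also have "\<dots> = (\<Sum>r<n. (\<Sum>i\<in>UNIV. a i * \<rho> i $$ (p,r)) * (\<Sum>j\<in>UNIV. b j * \<rho> j $$ (r,q)))"
    by (rule prod_sums[symmetric])
  also have "\<dots> = (\<Sum>r<n. lincomb_mat n a \<rho> $$ (p,r) * lincomb_mat n b \<rho> $$ (r,q))"
  proof (intro sum.cong refl)
    fix r assume "r \<in> {..<n}"
    hence r: "r < n" by simp
    show "(\<Sum>i\<in>UNIV. a i * \<rho> i $$ (p,r)) * (\<Sum>j\<in>UNIV. b j * \<rho> j $$ (r,q)) = lincomb_mat n a \<rho> $$ (p,r) * lincomb_mat n b \<rho> $$ (r,q)"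
      by (simp only: lc_entry[OF p r] lc_entry[OF r q])
  qed
  also have "\<dots> = (lincomb_mat n a \<rho> * lincomb_mat n b \<rho>) $$ (p,q)"
    by (rule mm_index[OF lc_carrier lc_carrier p q, symmetric])
  finally show "lincomb_mat n (cmult tm a b) \<rho> $$ (p,q) = (lincomb_mat n a \<rho> * lincomb_mat n b \<rho>) $$ (p,q)" .
qed (simp_all add: lincomb_mat_def)

lemma lc_sum_entry: assumes p: "p < n" and q: "q < n"
  shows "lincomb_mat n (\<lambda>i. \<Sum>k\<in>K. c k * g k i) \<rho> $$ (p,q) = (\<Sum>k\<in>K. c k * lincomb_mat n (g k) \<rho> $$ (p,q))"
proof -
  have "lincomb_mat n (\<lambda>i. \<Sum>k\<in>K. c k * g k i) \<rho> $$ (p,q) = (\<Sum>i\<in>UNIV. (\<Sum>k\<in>K. c k * g k i) * \<rho> i $$ (p,q))"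
    by (rule lc_entry[OF p q])
  also have "\<dots> = (\<Sum>k\<in>K. \<Sum>i\<in>UNIV. c k * g k i * \<rho> i $$ (p,q))" by (rule swap2)
  also have "\<dots> = (\<Sum>k\<in>K. c k * (\<Sum>i\<in>UNIV. g k i * \<rho> i $$ (p,q)))"
    by (simp only: sum_distrib_left mult.assoc)
  also have "\<dots> = (\<Sum>k\<in>K. c k * lincomb_mat n (g k) \<rho> $$ (p,q))"
    by (simp only: lc_entry[OF p q])
  finally show ?thesis .
qed

lemma lc_sum_vec: assumes w: "w \<in> carrier_vec n" and p: "p < n"
  shows "(lincomb_mat n (\<lambda>i. \<Sum>k\<in>K. c k * g k i) \<rho> *\<^sub>v w) $ p
     = (\<Sum>k\<in>K. c k * (lincomb_mat n (g k) \<rho> *\<^sub>v w) $ p)"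
proof -
  have "(lincomb_mat n (\<lambda>i. \<Sum>k\<in>K. c k * g k i) \<rho> *\<^sub>v w) $ p
      = (\<Sum>q<n. lincomb_mat n (\<lambda>i. \<Sum>k\<in>K. c k * g k i) \<rho> $$ (p,q) * w $ q)"
    by (rule mv_index[OF lc_carrier w p])
  also have "\<dots> = (\<Sum>q<n. (\<Sum>k\<in>K. c k * lincomb_mat n (g k) \<rho> $$ (p,q)) * w $ q)"
  proof (intro sum.cong refl)
    fix q assume "q \<in> {..<n}"
    hence q: "q < n" by simp
    show "lincomb_mat n (\<lambda>i. \<Sum>k\<in>K. c k * g k i) \<rho> $$ (p,q) * w $ q = (\<Sum>k\<in>K. c k * lincomb_mat n (g k) \<rho> $$ (p,q)) * w $ q"
      by (simp only: lc_sum_entry[OF p q])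
  qed
  also have "\<dots> = (\<Sum>k\<in>K. \<Sum>q<n. c k * lincomb_mat n (g k) \<rho> $$ (p,q) * w $ q)" by (rule swap2)
  also have "\<dots> = (\<Sum>k\<in>K. c k * (\<Sum>q<n. lincomb_mat n (g k) \<rho> $$ (p,q) * w $ q))"
    by (simp only: sum_distrib_left mult.assoc)
  also have "\<dots> = (\<Sum>k\<in>K. c k * (lincomb_mat n (g k) \<rho> *\<^sub>v w) $ p)"
    by (simp only: mv_index[OF lc_carrier w p])
  finally show ?thesis .
qed

lemma lc_zero_vec: assumes w: "w \<in> carrier_vec n" and p: "p < n"
  shows "(lincomb_mat n (\<lambda>_. 0) \<rho> *\<^sub>v w) $ p = (0::'a::field)"
proof -
  have "(lincomb_mat n (\<lambda>_. 0) \<rho> *\<^sub>v w) $ p = (\<Sum>q<n. lincomb_mat n (\<lambda>_. 0) \<rho> $$ (p,q) * w $ q)"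
    by (rule mv_index[OF lc_carrier w p])
  also have "\<dots> = (\<Sum>q<n. 0)"
  proof (intro sum.cong refl)
    fix q assume "q \<in> {..<n}"
    hence q: "q < n" by simp
    show "lincomb_mat n (\<lambda>_. 0) \<rho> $$ (p,q) * w $ q = (0::'a)" by (simp add: lc_entry[OF p q])
  qed
  finally show ?thesis by simp
qed

lemma A_Sq: assumes Sc: "S \<in> carrier_mat n n" and Zc: "Z \<in> carrier_mat n n"
  and SS: "S * S = Z * S + 1\<^sub>m n" and u: "(u :: 'a::field vec) \<in> carrier_vec n"
  shows "S *\<^sub>v (S *\<^sub>v u) = Z *\<^sub>v (S *\<^sub>v u) + u"
proof -
  have "S *\<^sub>v (S *\<^sub>v u) = (S * S) *\<^sub>v u" by (rule assoc_mult_mat_vec[symmetric]) (use Sc u in auto)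
  also have "\<dots> = (Z * S + 1\<^sub>m n) *\<^sub>v u" by (simp only: SS)
  also have "\<dots> = (Z * S) *\<^sub>v u + 1\<^sub>m n *\<^sub>v u"
    by (rule add_mult_distrib_mat_vec) (use Zc Sc u in auto)
  also have "(Z * S) *\<^sub>v u = Z *\<^sub>v (S *\<^sub>v u)" by (rule assoc_mult_mat_vec) (use Zc Sc u in auto)
  also have "1\<^sub>m n *\<^sub>v u = u" by (rule one_mult_mat_vec[OF u])
  finally show ?thesis .
qed

lemma A_X2S: assumes Sc: "S \<in> carrier_mat n n" and X1c: "X1 \<in> carrier_mat n n"
  and SXS: "S * X1 * S = X2" and u: "(u :: 'a::field vec) \<in> carrier_vec n"
  shows "X2 *\<^sub>v u = S *\<^sub>v (X1 *\<^sub>v (S *\<^sub>v u))"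
proof -
  have "X2 *\<^sub>v u = (S * X1 * S) *\<^sub>v u" by (simp only: SXS)
  also have "\<dots> = (S * X1) *\<^sub>v (S *\<^sub>v u)" by (rule assoc_mult_mat_vec) (use Sc X1c u in auto)
  also have "\<dots> = S *\<^sub>v (X1 *\<^sub>v (S *\<^sub>v u))" by (rule assoc_mult_mat_vec) (use Sc X1c u in auto)
  finally show ?thesis .
qed

lemma A_E1: assumes Sc: "S \<in> carrier_mat n n" and Zc: "Z \<in> carrier_mat n n" and X1c: "X1 \<in> carrier_mat n n"
  and Sq: "\<And>u. u \<in> carrier_vec n \<Longrightarrow> S *\<^sub>v (S *\<^sub>v u) = Z *\<^sub>v (S *\<^sub>v u) + u"
  and w: "(w :: 'a::field vec) \<in> carrier_vec n" and Zw: "Z *\<^sub>v w = \<eta> \<cdot>\<^sub>v w"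
  and SXs: "S *\<^sub>v (X1 *\<^sub>v (S *\<^sub>v w)) = \<nu> \<cdot>\<^sub>v w"
  and i: "i < n"
  shows "\<nu> * (S *\<^sub>v w) $ i = \<nu> * (\<eta> * w $ i) + (X1 *\<^sub>v (S *\<^sub>v w)) $ i"
proof -
  let ?s = "S *\<^sub>v w"
  have sc: "?s \<in> carrier_vec n" using Sc w by simp
  have xc: "X1 *\<^sub>v ?s \<in> carrier_vec n" using X1c sc by simp
  have "S *\<^sub>v (S *\<^sub>v (X1 *\<^sub>v ?s)) = Z *\<^sub>v (S *\<^sub>v (X1 *\<^sub>v ?s)) + X1 *\<^sub>v ?s" by (rule Sq[OF xc])
  hence "S *\<^sub>v (\<nu> \<cdot>\<^sub>v w) = Z *\<^sub>v (\<nu> \<cdot>\<^sub>v w) + X1 *\<^sub>v ?s" by (simp only: SXs)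
  hence e: "\<nu> \<cdot>\<^sub>v ?s = \<nu> \<cdot>\<^sub>v (\<eta> \<cdot>\<^sub>v w) + X1 *\<^sub>v ?s"
    by (simp only: mult_mat_vec[OF Sc w] mult_mat_vec[OF Zc w] Zw)
  have "(\<nu> \<cdot>\<^sub>v ?s) $ i = (\<nu> \<cdot>\<^sub>v (\<eta> \<cdot>\<^sub>v w) + X1 *\<^sub>v ?s) $ i" by (simp only: e)
  moreover have "(\<nu> \<cdot>\<^sub>v ?s) $ i = \<nu> * ?s $ i" using i Sc w by simp
  moreover have "(\<nu> \<cdot>\<^sub>v (\<eta> \<cdot>\<^sub>v w) + X1 *\<^sub>v ?s) $ i = \<nu> * (\<eta> * w $ i) + (X1 *\<^sub>v ?s) $ i"
    using i w xc Sc X1c by simp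
  ultimately show ?thesis by simp
qed

lemma A_X1y: assumes X1c: "X1 \<in> carrier_mat n n" and sc: "(s :: 'a::field vec) \<in> carrier_vec n"
  and w: "w \<in> carrier_vec n" and X1w: "X1 *\<^sub>v w = lam \<cdot>\<^sub>v w"
  and E1: "\<And>i. i < n \<Longrightarrow> \<nu> * s $ i = \<nu> * (\<eta> * w $ i) + (X1 *\<^sub>v s) $ i"
  shows "X1 *\<^sub>v (X1 *\<^sub>v s - lam \<cdot>\<^sub>v s) = \<nu> \<cdot>\<^sub>v (X1 *\<^sub>v s - lam \<cdot>\<^sub>v s)"
proof -
  have xc: "X1 *\<^sub>v s \<in> carrier_vec n" using X1c sc by simp
  have Xx: "X1 *\<^sub>v s = \<nu> \<cdot>\<^sub>v s - (\<nu> * \<eta>) \<cdot>\<^sub>v w"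
  proof (rule eq_vecI)
    fix i assume "i < dim_vec (\<nu> \<cdot>\<^sub>v s - (\<nu> * \<eta>) \<cdot>\<^sub>v w)"
    hence i: "i < n" using w by simp
    have "(\<nu> \<cdot>\<^sub>v s - (\<nu> * \<eta>) \<cdot>\<^sub>v w) $ i = \<nu> * s $ i - \<nu> * \<eta> * w $ i" using i sc w by simp
    also have "\<dots> = (X1 *\<^sub>v s) $ i" using E1[OF i] by (simp add: algebra_simps)
    finally show "(X1 *\<^sub>v s) $ i = (\<nu> \<cdot>\<^sub>v s - (\<nu> * \<eta>) \<cdot>\<^sub>v w) $ i" by simp
  next
    show "dim_vec (X1 *\<^sub>v s) = dim_vec (\<nu> \<cdot>\<^sub>v s - (\<nu> * \<eta>) \<cdot>\<^sub>v w)" using X1c w by simp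
  qed
  have "X1 *\<^sub>v (X1 *\<^sub>v s - lam \<cdot>\<^sub>v s) = X1 *\<^sub>v (X1 *\<^sub>v s) - X1 *\<^sub>v (lam \<cdot>\<^sub>v s)"
    by (rule mult_minus_distrib_mat_vec) (use X1c sc xc in auto)
  also have "X1 *\<^sub>v (X1 *\<^sub>v s) = X1 *\<^sub>v (\<nu> \<cdot>\<^sub>v s - (\<nu> * \<eta>) \<cdot>\<^sub>v w)" by (simp only: Xx)
  also have "\<dots> = X1 *\<^sub>v (\<nu> \<cdot>\<^sub>v s) - X1 *\<^sub>v ((\<nu> * \<eta>) \<cdot>\<^sub>v w)"
    by (rule mult_minus_distrib_mat_vec) (use X1c sc w in auto)
  also have "X1 *\<^sub>v (\<nu> \<cdot>\<^sub>v s) = \<nu> \<cdot>\<^sub>v (X1 *\<^sub>v s)" by (rule mult_mat_vec[OF X1c sc])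
  also have "X1 *\<^sub>v ((\<nu> * \<eta>) \<cdot>\<^sub>v w) = (\<nu> * \<eta>) \<cdot>\<^sub>v (lam \<cdot>\<^sub>v w)"
    by (simp only: mult_mat_vec[OF X1c w] X1w)
  also have "X1 *\<^sub>v (lam \<cdot>\<^sub>v s) = lam \<cdot>\<^sub>v (X1 *\<^sub>v s)" by (rule mult_mat_vec[OF X1c sc])
  finally have L: "X1 *\<^sub>v (X1 *\<^sub>v s - lam \<cdot>\<^sub>v s) =
      \<nu> \<cdot>\<^sub>v (X1 *\<^sub>v s) - (\<nu> * \<eta>) \<cdot>\<^sub>v (lam \<cdot>\<^sub>v w) - lam \<cdot>\<^sub>v (X1 *\<^sub>v s)" .
  show ?thesis unfolding L
  proof (rule eq_vecI)
    fix i assume "i < dim_vec (\<nu> \<cdot>\<^sub>v (X1 *\<^sub>v s - lam \<cdot>\<^sub>v s))"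
    hence i: "i < n" using sc by simp
    have e: "(X1 *\<^sub>v s) $ i = \<nu> * s $ i - \<nu> * \<eta> * w $ i"
      using E1[OF i] by (simp add: algebra_simps)
    have l: "(\<nu> \<cdot>\<^sub>v (X1 *\<^sub>v s) - (\<nu> * \<eta>) \<cdot>\<^sub>v (lam \<cdot>\<^sub>v w) - lam \<cdot>\<^sub>v (X1 *\<^sub>v s)) $ i
        = \<nu> * (X1 *\<^sub>v s) $ i - \<nu> * \<eta> * (lam * w $ i) - lam * (X1 *\<^sub>v s) $ i"
      using i w xc X1c by simp
    have r: "(\<nu> \<cdot>\<^sub>v (X1 *\<^sub>v s - lam \<cdot>\<^sub>v s)) $ i = \<nu> * ((X1 *\<^sub>v s) $ i - lam * s $ i)"
      using i sc xc X1c by simp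
    show "(\<nu> \<cdot>\<^sub>v (X1 *\<^sub>v s) - (\<nu> * \<eta>) \<cdot>\<^sub>v (lam \<cdot>\<^sub>v w) - lam \<cdot>\<^sub>v (X1 *\<^sub>v s)) $ i
        = (\<nu> \<cdot>\<^sub>v (X1 *\<^sub>v s - lam \<cdot>\<^sub>v s)) $ i"
      unfolding l r e by (simp add: algebra_simps)
  next
    show "dim_vec (\<nu> \<cdot>\<^sub>v (X1 *\<^sub>v s) - (\<nu> * \<eta>) \<cdot>\<^sub>v (lam \<cdot>\<^sub>v w) - lam \<cdot>\<^sub>v (X1 *\<^sub>v s))
       = dim_vec (\<nu> \<cdot>\<^sub>v (X1 *\<^sub>v s - lam \<cdot>\<^sub>v s))" using sc w xc X1c by simp
  qed
qed

lemma A_case0: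
  assumes Sc: "S \<in> carrier_mat n n" and Zc: "Z \<in> carrier_mat n n" and X1c: "X1 \<in> carrier_mat n n"
  and Sq: "\<And>u. u \<in> carrier_vec n \<Longrightarrow> S *\<^sub>v (S *\<^sub>v u) = Z *\<^sub>v (S *\<^sub>v u) + u"
  and w: "(w :: 'a::field vec) \<in> carrier_vec n" and Zw: "Z *\<^sub>v w = \<eta> \<cdot>\<^sub>v w"
  and X1w: "X1 *\<^sub>v w = lam \<cdot>\<^sub>v w"
  and SXs: "S *\<^sub>v (X1 *\<^sub>v (S *\<^sub>v w)) = \<nu> \<cdot>\<^sub>v w"
  and p0: "p0 < n" "w $ p0 \<noteq> 0"
  and sw: "\<And>i. i < n \<Longrightarrow> (S *\<^sub>v w) $ i = \<mu> * w $ i"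
  shows "\<mu>^2 - \<mu> * \<eta> - 1 = 0 \<and> \<nu> = \<mu> * \<mu> * lam"
proof -
  define s where "s = S *\<^sub>v w"
  have sc: "s \<in> carrier_vec n" unfolding s_def using Sc w by simp
  have sv: "s = \<mu> \<cdot>\<^sub>v w" unfolding s_def
  proof (rule eq_vecI)
    fix i assume "i < dim_vec (\<mu> \<cdot>\<^sub>v w)"
    hence i: "i < n" using w by simp
    show "(S *\<^sub>v w) $ i = (\<mu> \<cdot>\<^sub>v w) $ i" using sw[OF i] i w by simp
  next
    show "dim_vec (S *\<^sub>v w) = dim_vec (\<mu> \<cdot>\<^sub>v w)" using Sc w by simp
  qed
  have "S *\<^sub>v (S *\<^sub>v w) = Z *\<^sub>v (S *\<^sub>v w) + w" by (rule Sq[OF w])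
  hence "S *\<^sub>v (\<mu> \<cdot>\<^sub>v w) = Z *\<^sub>v (\<mu> \<cdot>\<^sub>v w) + w" unfolding s_def[symmetric] sv .
  hence "\<mu> \<cdot>\<^sub>v s = \<mu> \<cdot>\<^sub>v (\<eta> \<cdot>\<^sub>v w) + w"
    by (simp only: mult_mat_vec[OF Sc w] mult_mat_vec[OF Zc w] Zw s_def)
  hence "(\<mu> \<cdot>\<^sub>v s) $ p0 = (\<mu> \<cdot>\<^sub>v (\<eta> \<cdot>\<^sub>v w) + w) $ p0" by (simp only:)
  moreover have "(\<mu> \<cdot>\<^sub>v s) $ p0 = \<mu> * (\<mu> * w $ p0)" using p0(1) Sc w sw[OF p0(1)] unfolding s_def by simp
  moreover have "(\<mu> \<cdot>\<^sub>v (\<eta> \<cdot>\<^sub>v w) + w) $ p0 = \<mu> * (\<eta> * w $ p0) + w $ p0" using p0(1) w by simp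
  ultimately have "\<mu> * (\<mu> * w $ p0) = \<mu> * (\<eta> * w $ p0) + w $ p0" by simp
  hence "(\<mu> * \<mu> - \<mu> * \<eta> - 1) * w $ p0 = 0" by (simp add: algebra_simps)
  hence quad: "\<mu>^2 - \<mu> * \<eta> - 1 = 0" using p0(2) by (simp add: power2_eq_square)
  have "\<nu> \<cdot>\<^sub>v w = S *\<^sub>v (X1 *\<^sub>v s)" using SXs unfolding s_def by simp
  also have "\<dots> = S *\<^sub>v (X1 *\<^sub>v (\<mu> \<cdot>\<^sub>v w))" by (simp only: sv)
  also have "\<dots> = S *\<^sub>v (\<mu> \<cdot>\<^sub>v (lam \<cdot>\<^sub>v w))" by (simp only: mult_mat_vec[OF X1c w] X1w)
  also have "\<dots> = (\<mu> * lam) \<cdot>\<^sub>v s" by (simp only: smult_smult_assoc mult_mat_vec[OF Sc w] s_def)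
  finally have "(\<nu> \<cdot>\<^sub>v w) $ p0 = ((\<mu> * lam) \<cdot>\<^sub>v s) $ p0" by (simp only:)
  moreover have "(\<nu> \<cdot>\<^sub>v w) $ p0 = \<nu> * w $ p0" using p0(1) w by simp
  moreover have "((\<mu> * lam) \<cdot>\<^sub>v s) $ p0 = \<mu> * lam * (\<mu> * w $ p0)" using p0(1) Sc w sw[OF p0(1)] unfolding s_def by simp
  ultimately have "\<nu> * w $ p0 = \<mu> * lam * (\<mu> * w $ p0)" by simp
  hence "(\<nu> - \<mu> * \<mu> * lam) * w $ p0 = 0" by (simp add: algebra_simps)
  hence nu: "\<nu> = \<mu> * \<mu> * lam" using p0(2) by simp
  show ?thesis using quad nu by simp
qed

lemma A_gamma: assumes quad: "\<mu>^2 - \<mu> * \<eta> - 1 = 0" and root: "poly m \<eta> = 0"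
  shows "\<mu> * \<mu> \<in> Gamma_R (m :: 'a::field poly)"
proof -
  have mm: "\<mu> * (\<mu> - \<eta>) = 1" using quad by (simp add: power2_eq_square algebra_simps)
  hence "\<mu> - \<eta> \<noteq> 0" by (metis mult_zero_right zero_neq_one)
  hence g: "\<mu> / (\<mu> - \<eta>) = \<mu> * \<mu>" using mm by (simp add: divide_eq_eq mult.assoc)
  have "\<mu> / (\<mu> - \<eta>) \<in> {\<mu> / (\<mu> - \<eta>) | \<mu> \<eta>. poly m \<eta> = 0 \<and> \<mu>^2 - \<mu> * \<eta> - 1 = 0}"
    unfolding mem_Collect_eq by (rule exI[of _ \<mu>], rule exI[of _ \<eta>]) (simp only: root quad simp_thms)
  hence "1 * (\<mu> / (\<mu> - \<eta>)) \<in> Gamma_R m" unfolding Gamma_R_def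
    by (rule gen_mult_subgroup.mul[OF gen_mult_subgroup.one])
  thus ?thesis using g by simp
qed

lemma Lk_gen:
  assumes Zc: "Z \<in> carrier_mat n n" and wc: "w \<in> carrier_vec n" and Zw: "Z *\<^sub>v w = (\<eta>::'a::field) \<cdot>\<^sub>v w"
    and unit: "lincomb_mat n tu \<rho> = 1\<^sub>m n"
    and Lf: "\<And>u. lincomb_mat n (f u) \<rho> = Z * lincomb_mat n u \<rho>"
  shows "lincomb_mat n ((f ^^ k) (tu :: 'i::finite \<Rightarrow> 'a)) \<rho> *\<^sub>v w = \<eta> ^ k \<cdot>\<^sub>v w"
proof (induct k)
  case 0
  have "lincomb_mat n ((f ^^ 0) tu) \<rho> = 1\<^sub>m n" using unit by simp
  hence "lincomb_mat n ((f ^^ 0) tu) \<rho> *\<^sub>v w = w" using wc by simp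
  thus ?case by simp
next
  case (Suc k)
  have "(f ^^ Suc k) tu = f ((f ^^ k) tu)" by simp
  hence "lincomb_mat n ((f ^^ Suc k) tu) \<rho> = Z * lincomb_mat n ((f ^^ k) tu) \<rho>" using Lf by metis
  hence "lincomb_mat n ((f ^^ Suc k) tu) \<rho> *\<^sub>v w = (Z * lincomb_mat n ((f ^^ k) tu) \<rho>) *\<^sub>v w" by (rule arg_cong)
  also have "\<dots> = Z *\<^sub>v (lincomb_mat n ((f ^^ k) tu) \<rho> *\<^sub>v w)" by (rule assoc_mult_mat_vec[OF Zc lc_carrier wc])
  also have "\<dots> = Z *\<^sub>v (\<eta> ^ k \<cdot>\<^sub>v w)" by (simp only: Suc)
  also have "\<dots> = \<eta> ^ k \<cdot>\<^sub>v (Z *\<^sub>v w)" by (rule mult_mat_vec[OF Zc wc])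
  also have "\<dots> = \<eta> ^ k \<cdot>\<^sub>v (\<eta> \<cdot>\<^sub>v w)" by (simp only: Zw)
  also have "\<dots> = (\<eta> ^ k * \<eta>) \<cdot>\<^sub>v w" by (rule smult_smult_assoc)
  also have "\<eta> ^ k * \<eta> = \<eta> ^ Suc k" by (simp add: mult.commute)
  finally show ?case .
qed

theorem lemma8p3:
  fixes \<iota> :: "'k::comm_ring_1 \<Rightarrow> 'K::field"
    and z :: 'k
    and mA :: "'b::finite \<Rightarrow> 'b \<Rightarrow> 'b \<Rightarrow> 'k" and uA :: "'b \<Rightarrow> 'k" and pA :: "'b \<Rightarrow> bool"
    and tr :: "'b \<Rightarrow> 'k" and dual :: "'b \<Rightarrow> 'b \<Rightarrow> 'k"
    and mR :: "'r::finite \<Rightarrow> 'r \<Rightarrow> 'r \<Rightarrow> 'K" and uR :: "'r \<Rightarrow> 'K" and pR :: "'r \<Rightarrow> bool"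
    and m :: "'K poly"
    and n :: nat and \<rho> :: "'r \<times> 'b \<times> 'b \<Rightarrow> 'K mat" and X1 X2 S :: "'K mat"
  assumes "alg_closed_field TYPE('K)"
    and "ring_embedding \<iota>"
    and "\<exists>w. z * w = 1"
    and "sym_frob_superalg mA uA pA tr dual"
    and "supercomm_superalg mR uR pR"
    and "is_min_poly (\<lambda>v. (\<lambda>k. \<iota> z * cmult (tmul mR pR mA pA \<iota>) (ttau uR dual \<iota>) v k)) m"
    and "qawa2_module mR uR pR mA uA pA dual \<iota> z n \<rho> X1 X2 S"
  shows "\<forall>\<nu>. eigenvalue X2 \<nu> \<longrightarrow>
           (\<exists>lam. eigenvalue X1 lam \<and> (\<nu> = lam \<or> (\<exists>\<gamma>\<in>Gamma_R m. \<nu> = \<gamma> * lam)))"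
proof (intro allI impI)
  fix \<nu> assume ev: "eigenvalue X2 \<nu>"
  note ac = assms(1)
  define tm where "tm = tmul mR pR mA pA \<iota>"
  define tt where "tt = ttau uR dual \<iota>"
  define tu where "tu = tunit uR uA \<iota>"
  define f where "f = (\<lambda>v. (\<lambda>k. \<iota> z * cmult (tmul mR pR mA pA \<iota>) (ttau uR dual \<iota>) v k))"
  define T where "T = lincomb_mat n tt \<rho>"
  define Z where "Z = \<iota> z \<cdot>\<^sub>m T"
  have Rc: "\<And>i. \<rho> i \<in> carrier_mat n n" and X1c: "X1 \<in> carrier_mat n n" and X2c: "X2 \<in> carrier_mat n n"
    and Sc: "S \<in> carrier_mat n n" and unit: "lincomb_mat n tu \<rho> = 1\<^sub>m n"
    and hom: "\<And>i j. \<rho> i * \<rho> j = lincomb_mat n (tm i j) \<rho>"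
    and X12: "X1 * X2 = X2 * X1" and X1R: "\<And>i. X1 * \<rho> i = \<rho> i * X1" and X2R: "\<And>i. X2 * \<rho> i = \<rho> i * X2"
    and SS: "S * S = \<iota> z \<cdot>\<^sub>m (T * S) + 1\<^sub>m n" and SXS: "S * X1 * S = X2"
    using assms(7) unfolding qawa2_module_def tm_def tt_def tu_def T_def by auto
  have Tc: "T \<in> carrier_mat n n" unfolding T_def by simp
  have Zc: "Z \<in> carrier_mat n n" unfolding Z_def using Tc by simp
  have comZ: "X * Z = Z * X" if Xc: "X \<in> carrier_mat n n" and XR: "\<And>i. X * \<rho> i = \<rho> i * X" for X
  proof -
    have XT: "X * T = T * X" unfolding T_def by (rule lc_comm[OF Xc Rc XR])
    have "X * Z = \<iota> z \<cdot>\<^sub>m (X * T)" unfolding Z_def by (rule mult_smult_distrib[OF Xc Tc])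
    also have "\<dots> = \<iota> z \<cdot>\<^sub>m (T * X)" by (simp only: XT)
    also have "\<dots> = Z * X" unfolding Z_def by (rule mult_smult_assoc_mat[OF Tc Xc, symmetric])
    finally show ?thesis .
  qed
  have X1Z: "X1 * Z = Z * X1" by (rule comZ[OF X1c X1R])
  have X2Z: "X2 * Z = Z * X2" by (rule comZ[OF X2c X2R])
  from ev obtain v0 where v0: "v0 \<in> carrier_vec n" "v0 \<noteq> 0\<^sub>v n" "X2 *\<^sub>v v0 = \<nu> \<cdot>\<^sub>v v0"
    unfolding eigenvalue_def eigenvector_def using X2c by auto
  obtain w1 \<eta> where w1: "w1 \<in> carrier_vec n" "w1 \<noteq> 0\<^sub>v n" "Z *\<^sub>v w1 = \<eta> \<cdot>\<^sub>v w1"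
    and w1A: "\<And>A \<alpha>. A \<in> carrier_mat n n \<Longrightarrow> A * Z = Z * A \<Longrightarrow> A *\<^sub>v v0 = \<alpha> \<cdot>\<^sub>v v0 \<Longrightarrow> A *\<^sub>v w1 = \<alpha> \<cdot>\<^sub>v w1"
    using krylov[OF ac Zc v0(1,2)] by blast
  have X2w1: "X2 *\<^sub>v w1 = \<nu> \<cdot>\<^sub>v w1" by (rule w1A[OF X2c X2Z v0(3)])
  obtain w lam where w: "w \<in> carrier_vec n" "w \<noteq> 0\<^sub>v n" "X1 *\<^sub>v w = lam \<cdot>\<^sub>v w"
    and wA: "\<And>A \<alpha>. A \<in> carrier_mat n n \<Longrightarrow> A * X1 = X1 * A \<Longrightarrow> A *\<^sub>v w1 = \<alpha> \<cdot>\<^sub>v w1 \<Longrightarrow> A *\<^sub>v w = \<alpha> \<cdot>\<^sub>v w"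
    using krylov[OF ac X1c w1(1,2)] by blast
  have X2w: "X2 *\<^sub>v w = \<nu> \<cdot>\<^sub>v w" by (rule wA[OF X2c X12[symmetric] X2w1])
  have Zw: "Z *\<^sub>v w = \<eta> \<cdot>\<^sub>v w" by (rule wA[OF Zc X1Z[symmetric] w1(3)])
  have evlam: "eigenvalue X1 lam" unfolding eigenvalue_def eigenvector_def using w X1c by auto
  obtain p0 where p0: "p0 < n" "w $ p0 \<noteq> 0"
  proof -
    have "\<not> (\<forall>i<n. w $ i = 0)"
    proof
      assume "\<forall>i<n. w $ i = 0"
      hence "w = 0\<^sub>v n" using w(1) by (intro eq_vecI) auto
      with w(2) show False by simp
    qed
    thus ?thesis using that by blast
  qed
  \<comment> \<open>eta is a root of m\<close>
  have Lf: "lincomb_mat n (f u) \<rho> = Z * lincomb_mat n u \<rho>" for u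
  proof -
    have "lincomb_mat n (f u) \<rho> = \<iota> z \<cdot>\<^sub>m lincomb_mat n (cmult tm tt u) \<rho>"
      unfolding f_def tm_def tt_def by (rule lc_smult)
    also have "lincomb_mat n (cmult tm tt u) \<rho> = T * lincomb_mat n u \<rho>"
      unfolding T_def by (rule lc_mult[OF Rc hom])
    also have "\<iota> z \<cdot>\<^sub>m (T * lincomb_mat n u \<rho>) = Z * lincomb_mat n u \<rho>"
      unfolding Z_def by (rule mult_smult_assoc_mat[OF Tc lc_carrier, symmetric])
    finally show ?thesis .
  qed
  have Lk: "lincomb_mat n ((f ^^ k) tu) \<rho> *\<^sub>v w = \<eta> ^ k \<cdot>\<^sub>v w" for k
    by (rule Lk_gen[OF Zc w(1) Zw unit Lf])
  have op0: "op_poly m f tu = (\<lambda>_. 0)" using assms(6) unfolding is_min_poly_def f_def by blast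
  have "0 = (lincomb_mat n (op_poly m f tu) \<rho> *\<^sub>v w) $ p0"
    unfolding op0 by (rule lc_zero_vec[OF w(1) p0(1), symmetric])
  also have "\<dots> = (\<Sum>k\<le>degree m. coeff m k * (lincomb_mat n ((f ^^ k) tu) \<rho> *\<^sub>v w) $ p0)"
    unfolding op_poly_def by (rule lc_sum_vec[OF w(1) p0(1)])
  also have "\<dots> = (\<Sum>k\<le>degree m. coeff m k * \<eta> ^ k) * w $ p0"
    unfolding Lk using p0(1) w(1) by (simp add: sum_distrib_right mult.assoc)
  also have "\<dots> = poly m \<eta> * w $ p0" by (simp add: poly_altdef)
  finally have "poly m \<eta> * w $ p0 = 0" by simp
  hence root: "poly m \<eta> = 0" using p0(2) by simp
  \<comment> \<open>algebra\<close>
  have SS': "S * S = Z * S + 1\<^sub>m n" unfolding SS Z_def by (simp only: mult_smult_assoc_mat[OF Tc Sc])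
  have Sq: "\<And>u. u \<in> carrier_vec n \<Longrightarrow> S *\<^sub>v (S *\<^sub>v u) = Z *\<^sub>v (S *\<^sub>v u) + u"
    by (rule A_Sq[OF Sc Zc SS'])
  have SXs: "S *\<^sub>v (X1 *\<^sub>v (S *\<^sub>v w)) = \<nu> \<cdot>\<^sub>v w"
    using A_X2S[OF Sc X1c SXS w(1)] X2w by simp
  have E1: "\<And>i. i < n \<Longrightarrow> \<nu> * (S *\<^sub>v w) $ i = \<nu> * (\<eta> * w $ i) + (X1 *\<^sub>v (S *\<^sub>v w)) $ i"
    by (rule A_E1[OF Sc Zc X1c Sq w(1) Zw SXs])
  define s where "s = S *\<^sub>v w"
  have sc: "s \<in> carrier_vec n" unfolding s_def using Sc w(1) by simp
  have xc: "X1 *\<^sub>v s \<in> carrier_vec n" using X1c sc by simp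
  define y where "y = X1 *\<^sub>v s - lam \<cdot>\<^sub>v s"
  have yc: "y \<in> carrier_vec n" unfolding y_def using xc sc by simp
  have X1y: "X1 *\<^sub>v y = \<nu> \<cdot>\<^sub>v y"
    unfolding y_def by (rule A_X1y[where \<eta>=\<eta>, OF X1c sc w(1) w(3)]) (use E1 in \<open>simp add: s_def\<close>)
  show "\<exists>lam. eigenvalue X1 lam \<and> (\<nu> = lam \<or> (\<exists>\<gamma>\<in>Gamma_R m. \<nu> = \<gamma> * lam))"
  proof (cases "y = 0\<^sub>v n")
    case False
    have "eigenvalue X1 \<nu>" unfolding eigenvalue_def eigenvector_def using X1c yc False X1y by auto
    thus ?thesis by blast
  next
    case True
    show ?thesis
    proof (cases "\<nu> = lam")
      case True
      thus ?thesis using evlam by blast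
    next
      case False
      hence nl: "\<nu> - lam \<noteq> 0" by simp
      define \<mu> where "\<mu> = \<nu> * \<eta> / (\<nu> - lam)"
      have xe: "(X1 *\<^sub>v s) $ i = lam * s $ i" if i: "i < n" for i
      proof -
        have "y $ i = 0" using True i by simp
        moreover have "y $ i = (X1 *\<^sub>v s) $ i - lam * s $ i" unfolding y_def using i sc xc X1c by simp
        ultimately show ?thesis by simp
      qed
      have sw: "(S *\<^sub>v w) $ i = \<mu> * w $ i" if i: "i < n" for i
      proof -
        have "(\<nu> - lam) * s $ i = \<nu> * \<eta> * w $ i" using E1[OF i] xe[OF i] unfolding s_def by (simp add: algebra_simps)
        thus ?thesis unfolding \<mu>_def s_def using nl by (simp add: field_simps)
      qed
      have qn: "\<mu>^2 - \<mu> * \<eta> - 1 = 0 \<and> \<nu> = \<mu> * \<mu> * lam"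
        by (rule A_case0[OF Sc Zc X1c Sq w(1) Zw w(3) SXs p0 sw])
      have "\<mu> * \<mu> \<in> Gamma_R m" using A_gamma qn root by blast
      thus ?thesis using evlam qn by blast
    qed
  qed
qed

end
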